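(* There exists $N_0=N_0(V,\nu,d)$ such that, assuming $\varepsilon\|T_1(\varepsilon,\lambda)\|_0\leq1$ for all $(\varepsilon,\lambda)\in[0,\varepsilon_0]\times\Lambda$, for every $N\geq N_0$, every $j_0\in\mathbb Z^d$ with $|j_0|<2N$ and every $(\varepsilon,\lambda)\in[0,\varepsilon_0]\times\Lambda$, one has $B^0_{2,N}(j_0;\varepsilon,\lambda)\subset(-11dN^2,11dN^2)$.
   Context: Setting. $d,\nu\geq1$; $|l|,|j|$ max norms, $\|j\|^2=\sum j_i^2$. $\bar\omega\in\mathbb R^\nu$, $|\bar\omega|\leq1$; $\Lambda=[1/2,3/2]$; $\tau>0$ a parameter; $\varepsilon_0>0$. $V\in C^r(\mathbb T^d;\mathbb R)$, $m$ its average, $V_0=V-m$. $f\in C^r(\mathbb T^\nu\times\mathbb T^d\times\mathbb R;\mathbb R)$, $(\varepsilon,\lambda)\mapsto u^+(\varepsilon,\lambda)\in H^s(\mathbb T^{\nu}\times\mathbb T^d;\mathbb C)$ ($s>(d+\nu)/2$), $p=f(\cdot,|u^+|^2)+f'(\cdot,|u^+|^2)|u^+|^2$, $q=f'(\cdot,|u^+|^2)(u^+)^2$. $T_1(\varepsilon,\lambda)$ is the matrix of multiplication by $\begin{pmatrix}p&q\\\bar q&p\end{pmatrix}$ in the Fourier basis $e_{(l,j),a}$; $\|\cdot\|_0$ the $L^2$ operator norm. With $\omega=\lambda\bar\omega$, $A(\varepsilon,\lambda,\theta)=D+T_2-\varepsilon T_1+\theta Y$ indexed by $(l,j,a)$,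 $D$ diagonal with entries $-\omega\cdot l+\|j\|^2+m$ ($a=0$) and $\omega\cdot l+\|j\|^2+m$ ($a=1$), $Y$ diagonal with entries $-1$ ($a=0$), $+1$ ($a=1$), $T_2$ multiplication by $V_0$ in each component. $A_{N,j_0}(\varepsilon,\lambda,\theta)$ is the restriction of $A$ to $|l|\leq N$, $|j-j_0|\leq N$. $B^0_{2,N}(j_0;\varepsilon,\lambda):=\{\theta\in\mathbb R:\|A^{-1}_{N,j_0}(\varepsilon,\lambda,\theta)\|_0>N^\tau/2\}$ (inverse norm $+\infty$ if not invertible). *)

theory Defs
  imports "HOL-Analysis.Analysis"
begin

text \<open>Index of the Fourier basis e_{(l,j),a}: l in Z^nu, j in Z^d, a in {0,1},
  where a = 0 is encoded as False and a = 1 as True.\<close>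
type_synonym ('v, 'd) idx = "(int^('v::finite)) \<times> (int^('d::finite)) \<times> bool"

definition maxnorm :: "int^('n::finite) \<Rightarrow> int" where
  "maxnorm k = Max (range (\<lambda>i. \<bar>k $ i\<bar>))"

definition sqnorm :: "int^'n \<Rightarrow> int" where
  "sqnorm k = (\<Sum>i\<in>UNIV. (k $ i)^2)"

definition idot :: "int^'n \<Rightarrow> real^'n \<Rightarrow> real" where
  "idot k x = (\<Sum>i\<in>UNIV. of_int (k $ i) * x $ i)"

definition tcube :: "(real^'n) set" where
  "tcube = cbox 0 (\<chi> i. 2 * pi)"

definition periodic1 :: "(real^'n \<Rightarrow> 'b) \<Rightarrow> bool" where
  "periodic1 g = (\<forall>x i. g (x + (2 * pi) *\<^sub>R axis i 1) = g x)"

definition periodic2 :: "(real^'v \<Rightarrow> real^'d \<Rightarrow> 'b) \<Rightarrow> bool" where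
  "periodic2 g = ((\<forall>x y i. g (x + (2 * pi) *\<^sub>R axis i 1) y = g x y) \<and>
                  (\<forall>x y i. g x (y + (2 * pi) *\<^sub>R axis i 1) = g x y))"

definition fcoef1 :: "(real^'d \<Rightarrow> complex) \<Rightarrow> int^'d \<Rightarrow> complex" where
  "fcoef1 g j = complex_of_real (1 / (2 * pi) ^ CARD('d)) *
     set_lebesgue_integral lborel tcube (\<lambda>y. g y * exp (- \<i> * complex_of_real (idot j y)))"

definition fcoef2 :: "(real^'v \<Rightarrow> real^'d \<Rightarrow> complex) \<Rightarrow> int^'v \<Rightarrow> int^'d \<Rightarrow> complex" where
  "fcoef2 g l j = complex_of_real (1 / (2 * pi) ^ (CARD('v) + CARD('d))) *
     set_lebesgue_integral lborel (tcube \<times> tcube)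
       (\<lambda>z. g (fst z) (snd z) * exp (- \<i> * complex_of_real (idot l (fst z) + idot j (snd z))))"

definition avg :: "(real^'d \<Rightarrow> real) \<Rightarrow> real" where
  "avg V = (1 / (2 * pi) ^ CARD('d)) * set_lebesgue_integral lborel tcube V"

fun Ck :: "nat \<Rightarrow> ('a::euclidean_space \<Rightarrow> real) \<Rightarrow> bool" where
  "Ck 0 g = continuous_on UNIV g"
| "Ck (Suc k) g = (g differentiable_on UNIV \<and>
       (\<forall>b\<in>Basis. Ck k (\<lambda>x. frechet_derivative g (at x) b)))"

definition in_Hs :: "real \<Rightarrow> (real^'v \<Rightarrow> real^'d \<Rightarrow> complex) \<Rightarrow> bool" where
  "in_Hs s g = (periodic2 g \<and>
     (\<lambda>z. g (fst z) (snd z)) \<in> borel_measurable lborel \<and>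
     set_integrable lborel (tcube \<times> tcube) (\<lambda>z. (cmod (g (fst z) (snd z)))^2) \<and>
     (\<lambda>(l, j). (1 + real_of_int (sqnorm l + sqnorm j)) powr s * (cmod (fcoef2 g l j))^2)
        summable_on UNIV)"

text \<open>L^2 operator norm of an infinite matrix (extended real, possibly infinite):
  supremum over finitely supported x with l2 norm at most 1 and finite sets of rows F.\<close>
definition opnorm0 :: "('i \<Rightarrow> 'i \<Rightarrow> complex) \<Rightarrow> ereal" where
  "opnorm0 T = (SUP xF \<in> {(x, F). finite {k. x k \<noteq> 0} \<and>
        (\<Sum>k\<in>{k. x k \<noteq> 0}. (cmod (x k))^2) \<le> 1 \<and> finite F}.
      ereal (sqrt (\<Sum>i\<in>snd xF. (cmod (\<Sum>k\<in>{k. fst xF k \<noteq> 0}. T i k * fst xF k))^2)))"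

definition fin_opnorm :: "'i set \<Rightarrow> ('i \<Rightarrow> 'i \<Rightarrow> complex) \<Rightarrow> real" where
  "fin_opnorm S M = Sup {sqrt (\<Sum>i\<in>S. (cmod (\<Sum>k\<in>S. M i k * x k))^2) | x.
                         (\<Sum>k\<in>S. (cmod (x k))^2) \<le> 1}"

definition is_inverse_on :: "'i set \<Rightarrow> ('i \<Rightarrow> 'i \<Rightarrow> complex) \<Rightarrow> ('i \<Rightarrow> 'i \<Rightarrow> complex) \<Rightarrow> bool" where
  "is_inverse_on S M B = (\<forall>i\<in>S. \<forall>k\<in>S.
      (\<Sum>m\<in>S. B i m * M m k) = (if i = k then 1 else 0) \<and>
      (\<Sum>m\<in>S. M i m * B m k) = (if i = k then 1 else 0))"

definition inv_opnorm :: "'i set \<Rightarrow> ('i \<Rightarrow> 'i \<Rightarrow> complex) \<Rightarrow> ereal" where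
  "inv_opnorm S M = (if \<exists>B. is_inverse_on S M B
      then ereal (fin_opnorm S (SOME B. is_inverse_on S M B)) else \<infinity>)"

text \<open>p and q built from f and u = u^+(eps,lambda); f' is the derivative in the last variable.\<close>
definition pfun :: "(real^'v \<Rightarrow> real^'d \<Rightarrow> real \<Rightarrow> real) \<Rightarrow> (real^'v \<Rightarrow> real^'d \<Rightarrow> complex)
    \<Rightarrow> real^'v \<Rightarrow> real^'d \<Rightarrow> complex" where
  "pfun f u x y = complex_of_real (f x y ((cmod (u x y))^2)
      + deriv (f x y) ((cmod (u x y))^2) * (cmod (u x y))^2)"

definition qfun :: "(real^'v \<Rightarrow> real^'d \<Rightarrow> real \<Rightarrow> real) \<Rightarrow> (real^'v \<Rightarrow> real^'d \<Rightarrow> complex)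
    \<Rightarrow> real^'v \<Rightarrow> real^'d \<Rightarrow> complex" where
  "qfun f u x y = complex_of_real (deriv (f x y) ((cmod (u x y))^2)) * (u x y)^2"

text \<open>T_1: matrix of multiplication by ((p, q), (conj q, p)) in the Fourier basis.\<close>
definition T1 :: "(real^'v \<Rightarrow> real^'d \<Rightarrow> real \<Rightarrow> real) \<Rightarrow> (real^'v \<Rightarrow> real^'d \<Rightarrow> complex)
    \<Rightarrow> ('v, 'd) idx \<Rightarrow> ('v, 'd) idx \<Rightarrow> complex" where
  "T1 f u = (\<lambda>(l, j, a) (l', j', a').
      fcoef2 (if a = a' then pfun f u
              else if \<not> a then qfun f u
              else (\<lambda>x y. cnj (qfun f u x y))) (l - l') (j - j'))"

text \<open>T_2: multiplication by V_0 = V - m in each component.\<close>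
definition T2 :: "(real^'d \<Rightarrow> real) \<Rightarrow> ('v, 'd) idx \<Rightarrow> ('v, 'd) idx \<Rightarrow> complex" where
  "T2 V = (\<lambda>(l, j, a) (l', j', a').
      if l = l' \<and> a = a' then fcoef1 (\<lambda>y. complex_of_real (V y - avg V)) (j - j') else 0)"

text \<open>A(eps,lambda,theta) = D + T_2 - eps T_1 + theta Y, with omega = lambda * omegabar.\<close>
definition Aop :: "(real^'d \<Rightarrow> real) \<Rightarrow> real^'v \<Rightarrow> (real^'v \<Rightarrow> real^'d \<Rightarrow> real \<Rightarrow> real)
    \<Rightarrow> (real \<Rightarrow> real \<Rightarrow> real^'v \<Rightarrow> real^'d \<Rightarrow> complex) \<Rightarrow> real \<Rightarrow> real \<Rightarrow> real
    \<Rightarrow> ('v, 'd) idx \<Rightarrow> ('v, 'd) idx \<Rightarrow> complex" where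
  "Aop V ombar f u eps lam theta = (\<lambda>(l, j, a) (l', j', a').
      (if (l, j, a) = (l', j', a') then
         complex_of_real ((if a then 1 else -1) * idot l (lam *\<^sub>R ombar)
                          + of_int (sqnorm j) + avg V + theta * (if a then 1 else -1))
       else 0)
      + T2 V (l, j, a) (l', j', a') - complex_of_real eps * T1 f (u eps lam) (l, j, a) (l', j', a'))"

definition trunc :: "nat \<Rightarrow> int^('d::finite) \<Rightarrow> ('v::finite, 'd) idx set" where
  "trunc N j0 = {(l, j, a). maxnorm l \<le> int N \<and> maxnorm (j - j0) \<le> int N}"

definition B02 :: "real \<Rightarrow> (real^'d \<Rightarrow> real) \<Rightarrow> real^'v \<Rightarrow> (real^'v \<Rightarrow> real^'d \<Rightarrow> real \<Rightarrow> real)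
    \<Rightarrow> (real \<Rightarrow> real \<Rightarrow> real^'v \<Rightarrow> real^'d \<Rightarrow> complex) \<Rightarrow> nat \<Rightarrow> int^'d \<Rightarrow> real \<Rightarrow> real
    \<Rightarrow> real set" where
  "B02 \<tau> V ombar f u N j0 eps lam =
     {theta. inv_opnorm (trunc N j0 :: ('v, 'd) idx set) (Aop V ombar f u eps lam theta)
               > ereal (real N powr \<tau> / 2)}"

end

theory Submission
  imports Defs "Jordan_Normal_Form.Determinant" "HOL-Analysis.Kronecker_Approximation_Theorem"
begin
no_notation Finite_Cartesian_Product.vec_nth (infixl "$" 90)
no_notation Inner_Product.inner (infix "\<bullet>" 70)

lemma inv_exists:
  fixes M :: "'i \<Rightarrow> 'i \<Rightarrow> complex"
  assumes S: "finite S"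
    and inj: "\<And>y. (\<forall>i\<in>S. (\<Sum>k\<in>S. M i k * y k) = 0) \<Longrightarrow> (\<forall>i\<in>S. y i = 0)"
  shows "\<exists>B. is_inverse_on S M B"
proof -
  define n where "n = card S"
  obtain f where f: "bij_betw f {0..<n} S" using ex_bij_betw_nat_finite[OF S] n_def by blast
  define g where "g = inv_into {0..<n} f"
  have gf: "\<And>k. k < n \<Longrightarrow> g (f k) = k" using f unfolding g_def
    by (simp add: bij_betw_inv_into_left)
  have fg: "\<And>s. s \<in> S \<Longrightarrow> f (g s) = s" using f unfolding g_def
    by (simp add: bij_betw_inv_into_right)
  have gS: "\<And>s. s \<in> S \<Longrightarrow> g s < n" using f unfolding g_def
    by (metis atLeastLessThan_iff bij_betw_def inv_into_into)
  have fS: "\<And>k. k < n \<Longrightarrow> f k \<in> S" using f by (auto simp: bij_betw_def)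
  have reidx: "\<And>h. (\<Sum>k\<in>S. h k) = (\<Sum>k'<n. h (f k'))"
    using sum.reindex_bij_betw[OF f] by (metis atLeast0LessThan)
  define A :: "complex mat" where "A = Matrix.mat n n (\<lambda>(i,k). M (f i) (f k))"
  have Ac: "A \<in> carrier_mat n n" unfolding A_def by simp
  have "det A \<noteq> 0"
  proof
    assume "det A = 0"
    then obtain v where v: "v \<in> carrier_vec n" "v \<noteq> 0\<^sub>v n" "A *\<^sub>v v = 0\<^sub>v n"
      using det_0_iff_vec_prod_zero_field[OF Ac] by blast
    define y where "y s = v $ (g s)" for s
    have "\<forall>i\<in>S. (\<Sum>k\<in>S. M i k * y k) = 0"
    proof
      fix i assume i: "i \<in> S"
      have "(\<Sum>k\<in>S. M i k * y k) = (\<Sum>k'<n. M i (f k') * v $ k')"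
        by (simp add: reidx y_def gf)
      also have "\<dots> = (A *\<^sub>v v) $ (g i)"
        using v(1) gS[OF i] fg[OF i]
        by (simp add: A_def mult_mat_vec_def scalar_prod_def atLeast0LessThan)
      also have "\<dots> = 0" using v(3) gS[OF i] by simp
      finally show "(\<Sum>k\<in>S. M i k * y k) = 0" .
    qed
    then have y0: "\<forall>i\<in>S. y i = 0" by (rule inj)
    have "v = 0\<^sub>v n"
    proof (rule eq_vecI)
      fix k assume "k < dim_vec (0\<^sub>v n)"
      then have k: "k < n" by simp
      have "v $ k = y (f k)" by (simp add: y_def gf[OF k])
      then show "v $ k = 0\<^sub>v n $ k" using y0 fS[OF k] k by simp
    qed (use v(1) in simp)
    with v(2) show False by simp
  qed
  from det_non_zero_imp_unit[OF Ac this, of "()"]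
  obtain Bm where Bm: "Bm \<in> carrier_mat n n" "Bm * A = 1\<^sub>m n" "A * Bm = 1\<^sub>m n"
    unfolding Units_def ring_mat_def by auto
  define B where "B s t = Bm $$ (g s, g t)" for s t
  have "is_inverse_on S M B"
    unfolding is_inverse_on_def
  proof (intro ballI conjI)
    fix s t assume s: "s \<in> S" and t: "t \<in> S"
    have gst: "(g s = g t) = (s = t)" using fg[OF s] fg[OF t] by metis
    have "(\<Sum>m\<in>S. B s m * M m t) = (\<Sum>m'<n. Bm $$ (g s, m') * A $$ (m', g t))"
      using gS[OF t] fg[OF t] by (simp add: reidx B_def gf A_def)
    also have "\<dots> = row Bm (g s) \<bullet> col A (g t)"
      unfolding scalar_prod_def using Bm(1) gS[OF s] gS[OF t] Ac
      by (intro sum.cong) (auto simp: atLeast0LessThan)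
    also have "\<dots> = (Bm * A) $$ (g s, g t)"
      using Bm(1) gS[OF s] gS[OF t] Ac by (subst index_mult_mat(1)) (auto simp: carrier_matD)
    also have "\<dots> = (if s = t then 1 else 0)"
      using Bm(2) gS[OF s] gS[OF t] gst by simp
    finally show "(\<Sum>m\<in>S. B s m * M m t) = (if s = t then 1 else 0)" .
    have "(\<Sum>m\<in>S. M s m * B m t) = (\<Sum>m'<n. A $$ (g s, m') * Bm $$ (m', g t))"
      using gS[OF s] fg[OF s] by (simp add: reidx B_def gf A_def)
    also have "\<dots> = row A (g s) \<bullet> col Bm (g t)"
      unfolding scalar_prod_def using Bm(1) gS[OF s] gS[OF t] Ac
      by (intro sum.cong) (auto simp: atLeast0LessThan)
    also have "\<dots> = (A * Bm) $$ (g s, g t)"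
      using Bm(1) gS[OF s] gS[OF t] Ac by (subst index_mult_mat(1)) (auto simp: carrier_matD)
    also have "\<dots> = (if s = t then 1 else 0)"
      using Bm(3) gS[OF s] gS[OF t] gst by simp
    finally show "(\<Sum>m\<in>S. M s m * B m t) = (if s = t then 1 else 0)" .
  qed
  then show ?thesis by blast
qed
notation Finite_Cartesian_Product.vec_nth (infixl "$" 90)
notation Inner_Product.inner (infix "\<bullet>" 70)

definition nrm :: "'i set \<Rightarrow> ('i \<Rightarrow> complex) \<Rightarrow> real" where
  "nrm S y = sqrt (\<Sum>i\<in>S. (cmod (y i))^2)"

lemma nrm_L2: "nrm S y = L2_set (\<lambda>i. cmod (y i)) S"
  by (simp add: nrm_def L2_set_def)

lemma nrm_nonneg: "nrm S y \<ge> 0"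
  by (simp add: nrm_def sum_nonneg)

lemma nrm_triangle: "nrm S (\<lambda>i. a i + b i) \<le> nrm S a + nrm S b"
proof -
  have "nrm S (\<lambda>i. a i + b i) \<le> L2_set (\<lambda>i. cmod (a i) + cmod (b i)) S"
    unfolding nrm_L2 by (rule L2_set_mono) (auto simp: norm_triangle_ineq)
  also have "\<dots> \<le> nrm S a + nrm S b"
    unfolding nrm_L2 by (rule L2_set_triangle_ineq)
  finally show ?thesis .
qed

lemma nrm_scale_low:
  fixes D :: "'i \<Rightarrow> real"
  assumes "\<forall>i\<in>S. \<bar>D i\<bar> \<ge> \<delta>" "\<delta> \<ge> 0"
  shows "\<delta> * nrm S y \<le> nrm S (\<lambda>i. complex_of_real (D i) * y i)"
proof -
  have "(\<delta> * nrm S y)^2 = (\<Sum>i\<in>S. \<delta>^2 * (cmod (y i))^2)"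
    by (simp add: nrm_def power_mult_distrib sum_nonneg sum_distrib_left)
  also have "\<dots> \<le> (\<Sum>i\<in>S. (cmod (complex_of_real (D i) * y i))^2)"
  proof (rule sum_mono)
    fix i assume i: "i \<in> S"
    have "\<delta>^2 \<le> (D i)^2" using assms i
      by (metis abs_le_square_iff abs_of_nonneg)
    then show "\<delta>^2 * (cmod (y i))^2 \<le> (cmod (complex_of_real (D i) * y i))^2"
      by (simp add: norm_mult power_mult_distrib mult_right_mono)
  qed
  also have "\<dots> = (nrm S (\<lambda>i. complex_of_real (D i) * y i))^2"
    by (simp add: nrm_def sum_nonneg)
  finally show ?thesis
    using nrm_nonneg assms(2) by (meson mult_nonneg_nonneg power2_le_imp_le)
qed

lemma nrm_zero: "finite S \<Longrightarrow> nrm S y = 0 \<Longrightarrow> \<forall>i\<in>S. y i = 0"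
  by (simp add: nrm_def sum_nonneg_eq_0_iff)

lemma inv_bound:
  fixes M P :: "'i \<Rightarrow> 'i \<Rightarrow> complex" and D :: "'i \<Rightarrow> real"
  assumes S: "finite S"
    and MD: "\<forall>i\<in>S. \<forall>k\<in>S. M i k = (if i = k then complex_of_real (D i) else 0) + P i k"
    and Dlow: "\<forall>i\<in>S. \<bar>D i\<bar> \<ge> \<delta>"
    and Pbd: "\<And>y. nrm S (\<lambda>i. \<Sum>k\<in>S. P i k * y k) \<le> \<rho> * nrm S y"
    and rho: "0 \<le> \<rho>" "\<rho> < \<delta>"
  shows "inv_opnorm S M \<le> ereal (1 / (\<delta> - \<rho>))"
proof -
  have low: "(\<delta> - \<rho>) * nrm S y \<le> nrm S (\<lambda>i. \<Sum>k\<in>S. M i k * y k)" for y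
  proof -
    have eq: "complex_of_real (D i) * y i = (\<Sum>k\<in>S. M i k * y k) + (- (\<Sum>k\<in>S. P i k * y k))"
      if i: "i \<in> S" for i
    proof -
      have "(\<Sum>k\<in>S. M i k * y k) = (\<Sum>k\<in>S. (if i = k then complex_of_real (D i) * y k else 0) + P i k * y k)"
        using MD i by (intro sum.cong) (auto simp: distrib_right)
      also have "\<dots> = complex_of_real (D i) * y i + (\<Sum>k\<in>S. P i k * y k)"
        using S i by (simp add: sum.distrib)
      finally show ?thesis by simp
    qed
    have "\<delta> * nrm S y \<le> nrm S (\<lambda>i. complex_of_real (D i) * y i)"
      using nrm_scale_low[OF Dlow] rho by simp
    also have "\<dots> = nrm S (\<lambda>i. (\<Sum>k\<in>S. M i k * y k) + (- (\<Sum>k\<in>S. P i k * y k)))"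
      unfolding nrm_def using eq by (intro arg_cong[where f=sqrt] sum.cong) auto
    also have "\<dots> \<le> nrm S (\<lambda>i. \<Sum>k\<in>S. M i k * y k) + nrm S (\<lambda>i. - (\<Sum>k\<in>S. P i k * y k))"
      by (rule nrm_triangle)
    also have "nrm S (\<lambda>i. - (\<Sum>k\<in>S. P i k * y k)) = nrm S (\<lambda>i. \<Sum>k\<in>S. P i k * y k)"
      by (simp add: nrm_def)
    finally show ?thesis using Pbd[of y] by (simp add: algebra_simps)
  qed
  have inj: "\<forall>i\<in>S. y i = 0" if "\<forall>i\<in>S. (\<Sum>k\<in>S. M i k * y k) = 0" for y
  proof -
    have "nrm S (\<lambda>i. \<Sum>k\<in>S. M i k * y k) = 0" using that by (simp add: nrm_def)
    then have "(\<delta> - \<rho>) * nrm S y \<le> 0" using low[of y] by simp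
    then have "nrm S y = 0" using rho nrm_nonneg[of S y]
      by (simp add: mult_le_0_iff)
    then show ?thesis using nrm_zero S by blast
  qed
  obtain B0 where B0: "is_inverse_on S M B0" using inv_exists[OF S inj] by blast
  define B where "B = (SOME B. is_inverse_on S M B)"
  have B: "is_inverse_on S M B" unfolding B_def using someI[of "is_inverse_on S M" B0] B0 by blast
  have "inv_opnorm S M = ereal (fin_opnorm S B)"
    unfolding inv_opnorm_def B_def using B0 by auto
  moreover have "fin_opnorm S B \<le> 1 / (\<delta> - \<rho>)"
    unfolding fin_opnorm_def
  proof (rule cSup_least)
    show "{sqrt (\<Sum>i\<in>S. (cmod (\<Sum>k\<in>S. B i k * x k))\<^sup>2) |x. (\<Sum>k\<in>S. (cmod (x k))\<^sup>2) \<le> 1} \<noteq> {}"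
    proof -
      have "(0::real) \<in> {sqrt (\<Sum>i\<in>S. (cmod (\<Sum>k\<in>S. B i k * x k))\<^sup>2) |x. (\<Sum>k\<in>S. (cmod (x k))\<^sup>2) \<le> 1}"
        by (rule CollectI, rule exI[where x="\<lambda>_. 0"]) simp
      then show ?thesis by blast
    qed
  next
    fix v assume "v \<in> {sqrt (\<Sum>i\<in>S. (cmod (\<Sum>k\<in>S. B i k * x k))\<^sup>2) |x. (\<Sum>k\<in>S. (cmod (x k))\<^sup>2) \<le> 1}"
    then obtain x where v: "v = nrm S (\<lambda>i. \<Sum>k\<in>S. B i k * x k)" and x: "(\<Sum>k\<in>S. (cmod (x k))\<^sup>2) \<le> 1"
      unfolding nrm_def by blast
    define z where "z i = (\<Sum>k\<in>S. B i k * x k)" for i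
    have Mz: "(\<Sum>k\<in>S. M i k * z k) = x i" if i: "i \<in> S" for i
    proof -
      have "(\<Sum>k\<in>S. M i k * z k) = (\<Sum>k\<in>S. \<Sum>m\<in>S. M i k * B k m * x m)"
        by (simp add: z_def sum_distrib_left mult.assoc)
      also have "\<dots> = (\<Sum>m\<in>S. (\<Sum>k\<in>S. M i k * B k m) * x m)"
        by (subst sum.swap) (simp add: sum_distrib_right)
      also have "\<dots> = (\<Sum>m\<in>S. (if i = m then 1 else 0) * x m)"
        using B i unfolding is_inverse_on_def by (intro sum.cong) auto
      also have "\<dots> = (\<Sum>m\<in>S. (if i = m then x m else 0))"
        by (intro sum.cong) auto
      also have "\<dots> = x i" using S i by simp
      finally show ?thesis .
    qed
    have "nrm S (\<lambda>i. \<Sum>k\<in>S. M i k * z k) = nrm S x"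
      unfolding nrm_def using Mz by (intro arg_cong[where f=sqrt] sum.cong) auto
    also have "\<dots> \<le> 1" using x by (simp add: nrm_def)
    finally have "(\<delta> - \<rho>) * nrm S z \<le> 1" using low[of z] by simp
    then show "v \<le> 1 / (\<delta> - \<rho>)" using rho
      by (simp add: v z_def[abs_def] field_simps)
  qed
  ultimately show ?thesis by simp
qed

lemma idot_add: "idot (k + m) y = idot k y + idot m y"
  by (simp add: idot_def sum.distrib distrib_right)
lemma idot_neg: "idot (- k) y = - idot k y"
  by (simp add: idot_def sum_negf)
lemma idot_zero[simp]: "idot 0 y = 0"
  by (simp add: idot_def)
lemma idot_inner: "idot k y = (\<chi> i. real_of_int (k $ i)) \<bullet> y"
  by (simp add: idot_def inner_vec_def)

definition ex :: "int^'d \<Rightarrow> real^'d \<Rightarrow> complex" where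
  "ex k y = exp (\<i> * complex_of_real (idot k y))"

lemma ex_mult: "ex k y * ex m y = ex (k + m) y"
  by (simp add: ex_def idot_add exp_add[symmetric] distrib_left)
lemma ex_cnj: "cnj (ex k y) = ex (- k) y"
  by (simp add: ex_def idot_neg exp_cnj)
lemma ex_zero[simp]: "ex 0 y = 1"
  by (simp add: ex_def)
lemma cmod_ex[simp]: "cmod (ex k y) = 1"
  by (simp add: ex_def)
lemma cont_ex: "continuous_on UNIV (ex k)"
  unfolding ex_def idot_inner by (intro continuous_intros)

lemma integral_lborel_prod:
  fixes f :: "'a::euclidean_space \<Rightarrow> real \<Rightarrow> complex"
  assumes int: "\<And>b. b \<in> Basis \<Longrightarrow> integrable lborel (f b)"
  shows "(\<integral>x. (\<Prod>b\<in>Basis. f b (x \<bullet> b)) \<partial>lborel) = (\<Prod>b\<in>Basis. integral\<^sup>L lborel (f b))"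
proof -
  interpret product_sigma_finite "\<lambda>_. lborel::real measure" by standard
  have meas: "f b \<in> borel_measurable borel" if "b \<in> Basis" for b
    using int[OF that] by (simp add: borel_measurable_integrable)
  have m2: "(\<lambda>x. \<Prod>b\<in>Basis. f b (x \<bullet> b)) \<in> borel_measurable borel"
    by (intro borel_measurable_prod measurable_compose[OF _ meas]) auto
  have m1: "(\<lambda>g. \<Sum>b\<in>Basis. g b *\<^sub>R b) \<in> measurable (\<Pi>\<^sub>M b\<in>Basis. (lborel::real measure)) (borel::'a measure)"
    by measurable
  have "(\<integral>x. (\<Prod>b\<in>Basis. f b (x \<bullet> b)) \<partial>lborel)
      = (\<integral>g. (\<Prod>b\<in>Basis. f b ((\<Sum>b'\<in>Basis. g b' *\<^sub>R b') \<bullet> b)) \<partial>(\<Pi>\<^sub>M b\<in>Basis. lborel))"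
    by (subst lborel_eq) (rule integral_distr[OF m1 m2])
  also have "\<dots> = (\<integral>g. (\<Prod>b\<in>Basis. f b (g b)) \<partial>(\<Pi>\<^sub>M b\<in>Basis. lborel))"
    by (intro Bochner_Integration.integral_cong refl prod.cong)
       (simp add: inner_sum_left inner_Basis if_distrib sum.delta cong: if_cong)
  also have "\<dots> = (\<Prod>b\<in>Basis. integral\<^sup>L lborel (f b))"
    by (rule product_integral_prod) (auto intro: int)
  finally show ?thesis .
qed

lemma integral_exp_1d:
  fixes n :: int
  shows "(LINT t|lborel. indicator {0..2*pi} t *\<^sub>R exp (\<i> * complex_of_real (of_int n * t)))
         = (if n = 0 then complex_of_real (2*pi) else 0)"
proof -
  have si: "set_integrable lborel {0..2*pi} (\<lambda>t. exp (\<i> * complex_of_real (of_int n * t)))"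
    unfolding set_integrable_def
    by (rule borel_integrable_compact) (auto intro!: continuous_intros)
  have "(LINT t|lborel. indicator {0..2*pi} t *\<^sub>R exp (\<i> * complex_of_real (of_int n * t)))
      = integral {0..2*pi} (\<lambda>t. exp (\<i> * complex_of_real (of_int n * t)))"
    using set_borel_integral_eq_integral(2)[OF si] by (simp add: set_lebesgue_integral_def)
  also have "\<dots> = (if n = 0 then complex_of_real (2*pi) else 0)"
  proof (cases "n = 0")
    case True then show ?thesis by (simp add: scaleR_conv_of_real)
  next
    case False
    have "integral {0..2*pi} (\<lambda>t. exp (\<i> * complex_of_real (of_int n * t)))
        = integral {0..2*pi} (\<lambda>t. exp ((\<i> * of_int n) * complex_of_real t))"
      by (simp add: mult.assoc)
    also have "\<dots> = (exp ((\<i> * of_int n) * of_real (2*pi)) - 1) / (\<i> * of_int n)"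
      using False by (intro integral_exp) auto
    also have "exp ((\<i> * of_int n) * of_real (2*pi)) = 1"
      using exp_integer_2pi[of "of_int n"] by (simp add: mult_ac)
    finally show ?thesis using False by simp
  qed
  finally show ?thesis .
qed

definition cint :: "(real^'d \<Rightarrow> complex) \<Rightarrow> complex" where
  "cint g = set_lebesgue_integral lborel (tcube :: (real^'d) set) g"

lemma compact_tcube: "compact tcube"
  by (simp add: tcube_def)

lemma cint_integrable:
  fixes g :: "real^'d \<Rightarrow> complex"
  shows "continuous_on UNIV g \<Longrightarrow> set_integrable lborel (tcube :: (real^'d) set) g"
  unfolding set_integrable_def
  by (rule borel_integrable_compact[OF compact_tcube]) (auto intro: continuous_on_subset)

lemma Basis_cart_range: "(Basis :: (real^'n) set) = range (\<lambda>i. axis i 1)"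
  by (auto simp: Basis_vec_def)

lemma inj_axis1: "inj (\<lambda>i::'n::finite. axis i (1::real))"
  by (auto intro!: injI simp: axis_eq_axis)

lemma prod_Basis_cart:
  "(\<Prod>b\<in>(Basis :: (real^'n) set). F b) = (\<Prod>i\<in>UNIV. F (axis i 1))"
  unfolding Basis_cart_range by (subst prod.reindex[OF inj_axis1]) simp

lemma integral_lborel_prod_cart:
  fixes f :: "'n::finite \<Rightarrow> real \<Rightarrow> complex"
  assumes int: "\<And>i. integrable lborel (f i)"
  shows "(\<integral>y. (\<Prod>i\<in>UNIV. f i (y $ i)) \<partial>(lborel :: (real^'n) measure)) = (\<Prod>i\<in>UNIV. integral\<^sup>L lborel (f i))"
proof -
  define g where "g = (\<lambda>i::'n. axis i (1::real))"
  define F where "F b = f (inv_into UNIV g b)" for b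
  have Fg: "F (g i) = f i" for i unfolding F_def g_def by (simp add: inv_into_f_f[OF inj_axis1])
  have "(\<integral>y. (\<Prod>b\<in>(Basis :: (real^'n) set). F b (y \<bullet> b)) \<partial>lborel) = (\<Prod>b\<in>(Basis :: (real^'n) set). integral\<^sup>L lborel (F b))"
  proof (rule integral_lborel_prod)
    fix b :: "real^'n" assume "b \<in> Basis"
    then obtain i where "b = g i" by (auto simp: Basis_cart_range g_def)
    then show "integrable lborel (F b)" using int by (simp add: Fg)
  qed
  then show ?thesis
    unfolding prod_Basis_cart by (simp add: Fg[unfolded g_def] inner_axis)
qed

lemma indicator_tcube_cart:
  "indicator (tcube :: (real^'n) set) y = (\<Prod>i\<in>UNIV. indicator {0..2*pi} (y $ i) :: real)"
proof (cases "y \<in> tcube")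
  case True
  then have "\<forall>i. y $ i \<in> {0..2*pi}"
    by (auto simp: tcube_def mem_box_cart)
  then show ?thesis using True by simp
next
  case False
  then obtain i where i: "y $ i \<notin> {0..2*pi}"
    by (auto simp: tcube_def mem_box_cart)
  then have "indicator {0..2*pi} (y $ i) = (0::real)" by simp
  from prod_zero[OF finite_class.finite_UNIV bexI[where P="\<lambda>a. indicator {0..2*pi} (y $ a) = (0::real)", OF this UNIV_I]]
  show ?thesis using False by simp
qed

lemma ex_prod: "ex k y = (\<Prod>i\<in>UNIV. exp (\<i> * complex_of_real (of_int (k $ i) * y $ i)))"
  unfolding ex_def idot_def by (simp add: sum_distrib_left exp_sum)

lemma cint_ex:
  fixes k :: "int^'d"
  shows "cint (ex k) = (if k = 0 then complex_of_real ((2*pi)^CARD('d)) else 0)"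
proof -
  define \<phi> where "\<phi> n t = indicator {0..2*pi} t *\<^sub>R exp (\<i> * complex_of_real (of_int n * t))" for n :: int and t :: real
  have pt: "indicator tcube y *\<^sub>R ex k y = (\<Prod>i\<in>UNIV. \<phi> (k $ i) (y $ i))" for y
    unfolding \<phi>_def indicator_tcube_cart ex_prod scaleR_conv_of_real
    by (simp add: prod.distrib)
  have "cint (ex k) = (LINT y|lborel. (\<Prod>i\<in>UNIV. \<phi> (k $ i) (y $ i)))"
    unfolding cint_def set_lebesgue_integral_def pt ..
  also have "\<dots> = (\<Prod>i\<in>UNIV. integral\<^sup>L lborel (\<phi> (k $ i)))"
  proof (rule integral_lborel_prod_cart)
    fix i
    show "integrable lborel (\<phi> (k $ i))" unfolding \<phi>_def
      by (rule borel_integrable_compact) (auto intro!: continuous_intros)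
  qed
  also have "\<dots> = (\<Prod>i\<in>UNIV. (if k $ i = 0 then complex_of_real (2*pi) else 0))"
    unfolding \<phi>_def by (intro prod.cong refl integral_exp_1d)
  also have "\<dots> = (if k = 0 then complex_of_real ((2*pi)^CARD('d)) else 0)"
  proof (cases "k = 0")
    case True
    then show ?thesis by (simp add: of_real_power)
  next
    case False
    then obtain i where ki: "k $ i \<noteq> 0" by (auto simp: Finite_Cartesian_Product.vec_eq_iff)
    then have "(if k $ i = 0 then complex_of_real (2*pi) else 0) = 0" by simp
    from prod_zero[OF finite_class.finite_UNIV bexI[where P="\<lambda>i. (if k $ i = 0 then complex_of_real (2*pi) else 0) = 0", OF this UNIV_I]]
    show ?thesis using False by simp
  qed
  finally show ?thesis .
qed

definition rint :: "(real^'d \<Rightarrow> real) \<Rightarrow> real" where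
  "rint g = set_lebesgue_integral lborel (tcube :: (real^'d) set) g"

lemma rint_integrable:
  fixes g :: "real^'d \<Rightarrow> real"
  shows "continuous_on UNIV g \<Longrightarrow> set_integrable lborel (tcube :: (real^'d) set) g"
  unfolding set_integrable_def
  by (rule borel_integrable_compact[OF compact_tcube]) (auto intro: continuous_on_subset)

lemma rint_nonneg:
  assumes "\<And>y. 0 \<le> g y" shows "0 \<le> rint g"
  unfolding rint_def set_lebesgue_integral_def
  using assms by (intro Bochner_Integration.integral_nonneg) (simp add: indicator_def)

lemma cint_real: "cint (\<lambda>y. complex_of_real (g y)) = complex_of_real (rint g)"
  unfolding cint_def rint_def by (rule set_integral_complex_of_real)

lemma cint_add:
  fixes f g :: "real^'d \<Rightarrow> complex"
  shows "continuous_on UNIV f \<Longrightarrow> continuous_on UNIV g \<Longrightarrow> cint (\<lambda>y. f y + g y) = cint f + cint g"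
  unfolding cint_def by (intro set_integral_add(2) cint_integrable)

lemma cint_diff:
  fixes f g :: "real^'d \<Rightarrow> complex"
  shows "continuous_on UNIV f \<Longrightarrow> continuous_on UNIV g \<Longrightarrow> cint (\<lambda>y. f y - g y) = cint f - cint g"
  unfolding cint_def by (intro set_integral_diff(2) cint_integrable)

lemma cint_cmult: "cint (\<lambda>y. c * f y) = c * cint f"
  unfolding cint_def by (rule set_integral_mult_right)

lemma cint_sum:
  fixes f :: "'j \<Rightarrow> real^'d \<Rightarrow> complex"
  assumes "finite J" "\<And>j. continuous_on UNIV (f j)"
  shows "cint (\<lambda>y. \<Sum>j\<in>J. f j y) = (\<Sum>j\<in>J. cint (f j))"
  using assms(1)
proof (induction J rule: finite_induct)
  case empty
  then show ?case by (simp add: cint_def)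
next
  case (insert a F)
  have "cint (\<lambda>y. \<Sum>j\<in>insert a F. f j y) = cint (\<lambda>y. f a y + (\<Sum>j\<in>F. f j y))"
    using insert by simp
  also have "\<dots> = cint (f a) + cint (\<lambda>y. \<Sum>j\<in>F. f j y)"
    by (auto intro!: cint_add assms continuous_on_sum)
  finally show ?case using insert by simp
qed

lemma cint_cnj: "cint (\<lambda>y. cnj (f y)) = cnj (cint f)"
  unfolding cint_def set_lebesgue_integral_def
  by (simp only: complex_cnj_scaleR[symmetric] Bochner_Integration.integral_cnj)

lemma fcoef1_cint:
  fixes g :: "real^'d \<Rightarrow> complex"
  shows "fcoef1 g j = cint (\<lambda>y. g y * ex (- j) y) / complex_of_real ((2*pi)^CARD('d))"
  unfolding fcoef1_def cint_def ex_def idot_neg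
  by (simp add: field_simps)

lemma cint_trig:
  fixes c a :: "int^'d \<Rightarrow> complex"
  assumes J: "finite J"
  shows "cint (\<lambda>y. (\<Sum>j\<in>J. c j * ex j y) * cnj (\<Sum>k\<in>J. a k * ex k y))
       = complex_of_real ((2*pi)^CARD('d)) * (\<Sum>j\<in>J. c j * cnj (a j))"
proof -
  have "cint (\<lambda>y. (\<Sum>j\<in>J. c j * ex j y) * cnj (\<Sum>k\<in>J. a k * ex k y))
      = cint (\<lambda>y. \<Sum>j\<in>J. \<Sum>k\<in>J. (c j * cnj (a k)) * ex (j - k) y)"
  proof (rule arg_cong[where f=cint], rule ext)
    fix y
    have "(\<Sum>j\<in>J. c j * ex j y) * cnj (\<Sum>k\<in>J. a k * ex k y)
        = (\<Sum>j\<in>J. c j * ex j y) * (\<Sum>k\<in>J. cnj (a k) * ex (- k) y)"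
      by (simp add: ex_cnj)
    also have "\<dots> = (\<Sum>j\<in>J. \<Sum>k\<in>J. (c j * ex j y) * (cnj (a k) * ex (- k) y))"
      by (rule sum_product)
    also have "\<dots> = (\<Sum>j\<in>J. \<Sum>k\<in>J. (c j * cnj (a k)) * (ex j y * ex (- k) y))"
      by (simp add: mult_ac)
    also have "\<dots> = (\<Sum>j\<in>J. \<Sum>k\<in>J. (c j * cnj (a k)) * ex (j - k) y)"
      by (simp add: ex_mult)
    finally show "(\<Sum>j\<in>J. c j * ex j y) * cnj (\<Sum>k\<in>J. a k * ex k y) = (\<Sum>j\<in>J. \<Sum>k\<in>J. (c j * cnj (a k)) * ex (j - k) y)" .
  qed
  also have "\<dots> = (\<Sum>j\<in>J. \<Sum>k\<in>J. (c j * cnj (a k)) * cint (ex (j - k)))"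
    by (simp add: cint_sum J continuous_on_sum cont_ex continuous_on_mult_left cint_cmult)
  also have "\<dots> = (\<Sum>j\<in>J. \<Sum>k\<in>J. (if k = j then (c j * cnj (a j)) * complex_of_real ((2*pi)^CARD('d)) else 0))"
    by (intro sum.cong refl) (auto simp: cint_ex)
  also have "\<dots> = complex_of_real ((2*pi)^CARD('d)) * (\<Sum>j\<in>J. c j * cnj (a j))"
    using J by (simp add: sum_distrib_left mult_ac)
  finally show ?thesis .
qed

lemma bessel:
  fixes G :: "real^'d \<Rightarrow> complex"
  assumes G: "continuous_on UNIV G" and J: "finite J"
  shows "(2*pi)^CARD('d) * (\<Sum>j\<in>J. (cmod (fcoef1 G j))^2) \<le> rint (\<lambda>y. (cmod (G y))^2)"
proof -
  define P :: real where "P = (2*pi)^CARD('d)"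
  have P0: "P > 0" by (simp add: P_def)
  define c where "c j = fcoef1 G j" for j
  define Z where "Z y = (\<Sum>j\<in>J. c j * ex j y)" for y
  define Q where "Q = P * (\<Sum>j\<in>J. (cmod (c j))^2)"
  have sq: "\<And>z. z * cnj z = complex_of_real ((cmod z)^2)" using complex_norm_square by metis
  have cZ: "continuous_on UNIV Z" unfolding Z_def
    by (intro continuous_on_sum continuous_on_mult_left cont_ex)
  have cj: "cint (\<lambda>y. G y * ex (- j) y) = complex_of_real P * c j" for j
    using P0 unfolding c_def fcoef1_cint P_def by simp
  have A: "cint (\<lambda>y. G y * cnj (Z y)) = complex_of_real Q"
  proof -
    have "cint (\<lambda>y. G y * cnj (Z y)) = cint (\<lambda>y. \<Sum>j\<in>J. cnj (c j) * (G y * ex (- j) y))"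
      by (simp add: Z_def sum_distrib_left ex_cnj mult_ac)
    also have "\<dots> = (\<Sum>j\<in>J. cnj (c j) * cint (\<lambda>y. G y * ex (- j) y))"
      by (simp add: cint_sum J continuous_on_mult_left continuous_on_mult G cont_ex cint_cmult)
    also have "\<dots> = (\<Sum>j\<in>J. complex_of_real P * complex_of_real ((cmod (c j))^2))"
      by (intro sum.cong refl) (simp only: cj sq mult_ac)
    also have "\<dots> = complex_of_real Q"
      by (simp add: Q_def sum_distrib_left)
    finally show ?thesis .
  qed
  have B: "cint (\<lambda>y. Z y * cnj (G y)) = complex_of_real Q"
  proof -
    have "cint (\<lambda>y. Z y * cnj (G y)) = cint (\<lambda>y. cnj (G y * cnj (Z y)))" by (simp add: mult.commute)
    also have "\<dots> = complex_of_real Q" by (simp only: cint_cnj A) simp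
    finally show ?thesis .
  qed
  have C: "cint (\<lambda>y. Z y * cnj (Z y)) = complex_of_real Q"
    unfolding Z_def by (subst cint_trig[OF J]) (simp add: Q_def P_def sq sum_distrib_left)
  have cG: "continuous_on UNIV (\<lambda>y. cnj (G y))" using G by (intro continuous_intros)
  have cZ': "continuous_on UNIV (\<lambda>y. cnj (Z y))" using cZ by (intro continuous_intros)
  have "cint (\<lambda>y. (G y - Z y) * cnj (G y - Z y))
      = cint (\<lambda>y. (G y * cnj (G y) - G y * cnj (Z y)) - (Z y * cnj (G y) - Z y * cnj (Z y)))"
    by (simp add: algebra_simps)
  also have "\<dots> = (cint (\<lambda>y. G y * cnj (G y)) - cint (\<lambda>y. G y * cnj (Z y)))
        - (cint (\<lambda>y. Z y * cnj (G y)) - cint (\<lambda>y. Z y * cnj (Z y)))"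
    using G cZ cG cZ'
    by (simp add: cint_diff continuous_on_mult continuous_on_diff)
  also have "\<dots> = cint (\<lambda>y. G y * cnj (G y)) - complex_of_real Q"
    by (simp add: A B C)
  finally have eq: "cint (\<lambda>y. (G y - Z y) * cnj (G y - Z y)) = cint (\<lambda>y. G y * cnj (G y)) - complex_of_real Q" .
  have "cint (\<lambda>y. (G y - Z y) * cnj (G y - Z y)) = complex_of_real (rint (\<lambda>y. (cmod (G y - Z y))^2))"
    by (simp only: sq cint_real)
  moreover have "cint (\<lambda>y. G y * cnj (G y)) = complex_of_real (rint (\<lambda>y. (cmod (G y))^2))"
    by (simp only: sq cint_real)
  moreover have "0 \<le> rint (\<lambda>y. (cmod (G y - Z y))^2)" by (rule rint_nonneg) simp
  ultimately have "0 \<le> rint (\<lambda>y. (cmod (G y))^2) - Q"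
    using eq by (metis of_real_diff of_real_eq_iff)
  then show ?thesis by (simp add: Q_def P_def c_def)
qed

lemma sq_cnj: "z * cnj z = complex_of_real ((cmod z)^2)"
  using complex_norm_square by metis

lemma T2_core:
  fixes g :: "real^'d \<Rightarrow> complex" and x :: "int^'d \<Rightarrow> complex"
  assumes g: "continuous_on UNIV g" and Mb: "\<forall>y\<in>tcube. cmod (g y) \<le> Mv" and J: "finite J"
  shows "(\<Sum>j\<in>J. (cmod (\<Sum>k\<in>J. fcoef1 g (j - k) * x k))^2) \<le> Mv^2 * (\<Sum>k\<in>J. (cmod (x k))^2)"
proof -
  define P :: real where "P = (2*pi)^CARD('d)"
  have P0: "P > 0" by (simp add: P_def)
  define Y where "Y y = (\<Sum>k\<in>J. x k * ex k y)" for y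
  define G where "G y = g y * Y y" for y
  have cY: "continuous_on UNIV Y" unfolding Y_def
    by (intro continuous_on_sum continuous_on_mult_left cont_ex)
  have cG: "continuous_on UNIV G" unfolding G_def using g cY by (intro continuous_on_mult)
  have fG: "fcoef1 G j = (\<Sum>k\<in>J. fcoef1 g (j - k) * x k)" for j
  proof -
    have pw: "G y * ex (- j) y = (\<Sum>k\<in>J. x k * (g y * ex (- (j - k)) y))" for y
    proof -
      have "G y * ex (- j) y = (\<Sum>k\<in>J. x k * (g y * (ex k y * ex (- j) y)))"
        by (simp add: G_def Y_def sum_distrib_left sum_distrib_right mult_ac)
      also have "\<dots> = (\<Sum>k\<in>J. x k * (g y * ex (- (j - k)) y))"
        by (simp add: ex_mult)
      finally show ?thesis .
    qed
    have "cint (\<lambda>y. G y * ex (- j) y) = cint (\<lambda>y. \<Sum>k\<in>J. x k * (g y * ex (- (j - k)) y))"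
      by (simp only: pw)
    also have "\<dots> = (\<Sum>k\<in>J. x k * cint (\<lambda>y. g y * ex (- (j - k)) y))"
      by (simp add: cint_sum J continuous_on_mult_left continuous_on_mult g cont_ex cint_cmult)
    finally have "cint (\<lambda>y. G y * ex (- j) y) = (\<Sum>k\<in>J. x k * cint (\<lambda>y. g y * ex (- (j - k)) y))" .
    then show ?thesis
      by (simp add: fcoef1_cint sum_divide_distrib mult_ac)
  qed
  have bes: "P * (\<Sum>j\<in>J. (cmod (fcoef1 G j))^2) \<le> rint (\<lambda>y. (cmod (G y))^2)"
    unfolding P_def by (rule bessel[OF cG J])
  have "rint (\<lambda>y. (cmod (G y))^2) \<le> rint (\<lambda>y. Mv^2 * (cmod (Y y))^2)"
    unfolding rint_def
  proof (rule set_integral_mono)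
    show "set_integrable lborel tcube (\<lambda>y. (cmod (G y))\<^sup>2)"
      using cG by (intro rint_integrable continuous_intros)
    show "set_integrable lborel tcube (\<lambda>y. Mv^2 * (cmod (Y y))\<^sup>2)"
      using cY by (intro rint_integrable continuous_intros)
    fix y :: "real^'d" assume y: "y \<in> tcube"
    have "cmod (g y) \<le> Mv" using Mb y by blast
    then have "(cmod (g y))^2 \<le> Mv^2" by (simp add: power_mono)
    then show "(cmod (G y))\<^sup>2 \<le> Mv^2 * (cmod (Y y))\<^sup>2"
      by (simp add: G_def norm_mult power_mult_distrib mult_right_mono)
  qed
  also have "\<dots> = Mv^2 * rint (\<lambda>y. (cmod (Y y))^2)"
    unfolding rint_def by (rule set_integral_mult_right)
  also have "rint (\<lambda>y. (cmod (Y y))^2) = P * (\<Sum>k\<in>J. (cmod (x k))^2)"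
  proof -
    have "complex_of_real (rint (\<lambda>y. (cmod (Y y))^2)) = cint (\<lambda>y. Y y * cnj (Y y))"
      by (simp only: sq_cnj cint_real)
    also have "\<dots> = complex_of_real P * (\<Sum>k\<in>J. x k * cnj (x k))"
      unfolding Y_def P_def by (rule cint_trig[OF J])
    also have "\<dots> = complex_of_real (P * (\<Sum>k\<in>J. (cmod (x k))^2))"
      by (simp only: sq_cnj of_real_sum of_real_mult)
    finally show ?thesis by (simp only: of_real_eq_iff)
  qed
  finally have "P * (\<Sum>j\<in>J. (cmod (fcoef1 G j))^2) \<le> P * (Mv^2 * (\<Sum>k\<in>J. (cmod (x k))^2))"
    using bes by (simp add: mult_ac)
  then have "(\<Sum>j\<in>J. (cmod (fcoef1 G j))^2) \<le> Mv^2 * (\<Sum>k\<in>J. (cmod (x k))^2)"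
    using P0 by simp
  then show ?thesis by (simp add: fG)
qed

lemma Ck_cont: "Ck r g \<Longrightarrow> continuous_on UNIV g"
  by (cases r) (auto intro: differentiable_imp_continuous_on)

lemma maxnorm_le: "maxnorm (k::int^'n::finite) \<le> c \<longleftrightarrow> (\<forall>i. \<bar>k $ i\<bar> \<le> c)"
  unfolding maxnorm_def by (subst Max_le_iff) auto

lemma maxnorm_lt: "maxnorm (k::int^'n::finite) < c \<longleftrightarrow> (\<forall>i. \<bar>k $ i\<bar> < c)"
  unfolding maxnorm_def by (subst Max_less_iff) auto

lemma finite_box: "finite {k::int^'n::finite. \<forall>i. \<bar>k $ i\<bar> \<le> c}"
proof -
  have "{k::int^'n. \<forall>i. \<bar>k $ i\<bar> \<le> c} \<subseteq> (\<lambda>f. \<chi> i. f i) ` (PiE UNIV (\<lambda>_. {-c..c}))"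
  proof
    fix k :: "int^'n" assume "k \<in> {k. \<forall>i. \<bar>k $ i\<bar> \<le> c}"
    then have kb: "\<And>i. \<bar>k $ i\<bar> \<le> c" by simp
    have "k $ i \<in> {-c..c}" for i using kb[of i] by auto
    then have "(\<lambda>i. k $ i) \<in> PiE UNIV (\<lambda>_. {-c..c})" by (auto simp: PiE_iff)
    moreover have "k = (\<chi> i. (\<lambda>i. k $ i) i)" by simp
    ultimately show "k \<in> (\<lambda>f. \<chi> i. f i) ` (PiE UNIV (\<lambda>_. {-c..c}))" by blast
  qed
  then show ?thesis by (rule finite_subset) (auto intro!: finite_imageI finite_PiE)
qed

lemma finite_L: "finite {l::int^'n::finite. maxnorm l \<le> c}"
  using finite_box[of c] by (simp add: maxnorm_le)

lemma finite_J: "finite {j::int^'n::finite. maxnorm (j - j0) \<le> c}"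
proof -
  have "{j::int^'n. maxnorm (j - j0) \<le> c} \<subseteq> (\<lambda>k. k + j0) ` {l. maxnorm l \<le> c}"
  proof
    fix j assume "j \<in> {j::int^'n. maxnorm (j - j0) \<le> c}"
    then show "j \<in> (\<lambda>k. k + j0) ` {l. maxnorm l \<le> c}"
      by (intro image_eqI[of _ _ "j - j0"]) auto
  qed
  then show ?thesis using finite_L by (rule finite_subset[OF _ finite_imageI])
qed

lemma trunc_eq: "trunc N j0 = {l. maxnorm l \<le> int N} \<times> ({j. maxnorm (j - j0) \<le> int N} \<times> UNIV)"
  by (auto simp: trunc_def)

lemma sum_S:
  fixes F :: "('v::finite, 'd::finite) idx \<Rightarrow> 'b::comm_monoid_add"
  assumes "finite L" "finite J"
  shows "(\<Sum>i\<in>L \<times> (J \<times> UNIV). F i) = (\<Sum>l\<in>L. \<Sum>a\<in>UNIV. \<Sum>j\<in>J. F (l, j, a))"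
proof -
  have "(\<Sum>i\<in>L \<times> (J \<times> UNIV). F i) = (\<Sum>l\<in>L. \<Sum>p\<in>J \<times> UNIV. F (l, p))"
    by (subst sum.cartesian_product) simp
  also have "\<dots> = (\<Sum>l\<in>L. \<Sum>j\<in>J. \<Sum>a\<in>UNIV. F (l, j, a))"
    by (intro sum.cong refl) (subst sum.cartesian_product, simp)
  also have "\<dots> = (\<Sum>l\<in>L. \<Sum>a\<in>UNIV. \<Sum>j\<in>J. F (l, j, a))"
    by (intro sum.cong refl sum.swap)
  finally show ?thesis .
qed

lemma T2_row:
  fixes V :: "real^'d::finite \<Rightarrow> real" and y :: "('v::finite, 'd) idx \<Rightarrow> complex"
  assumes L: "finite L" and J: "finite J" and l: "l \<in> L"
  shows "(\<Sum>k\<in>L \<times> (J \<times> UNIV). T2 V (l, j, a) k * y k)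
       = (\<Sum>j'\<in>J. fcoef1 (\<lambda>z. complex_of_real (V z - avg V)) (j - j') * y (l, j', a))"
proof -
  define c where "c = fcoef1 (\<lambda>z. complex_of_real (V z - avg V))"
  have "(\<Sum>k\<in>L \<times> (J \<times> UNIV). T2 V (l, j, a) k * y k)
      = (\<Sum>l'\<in>L. \<Sum>a'\<in>UNIV. \<Sum>j'\<in>J. T2 V (l, j, a) (l', j', a') * y (l', j', a'))"
    by (rule sum_S[OF L J])
  also have "\<dots> = (\<Sum>l'\<in>L. \<Sum>a'\<in>UNIV. if l' = l \<and> a' = a then (\<Sum>j'\<in>J. c (j - j') * y (l, j', a)) else 0)"
    by (intro sum.cong refl) (auto simp: T2_def c_def)
  also have "\<dots> = (\<Sum>l'\<in>L. if l' = l then (\<Sum>j'\<in>J. c (j - j') * y (l, j', a)) else 0)"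
  proof (intro sum.cong refl)
    fix l' show "(\<Sum>a'\<in>UNIV. if l' = l \<and> a' = a then (\<Sum>j'\<in>J. c (j - j') * y (l, j', a)) else 0)
        = (if l' = l then (\<Sum>j'\<in>J. c (j - j') * y (l, j', a)) else 0)"
      by (cases "l' = l") simp_all
  qed
  also have "\<dots> = (\<Sum>j'\<in>J. c (j - j') * y (l, j', a))"
    using L l by simp
  finally show ?thesis unfolding c_def .
qed

lemma T2_op:
  fixes V :: "real^'d::finite \<Rightarrow> real" and y :: "('v::finite, 'd) idx \<Rightarrow> complex"
  assumes cV: "continuous_on UNIV V"
    and Mb: "\<forall>z\<in>tcube. cmod (complex_of_real (V z - avg V)) \<le> Mv" and Mv0: "0 \<le> Mv"
    and L: "finite L" and J: "finite J"
  shows "nrm (L \<times> (J \<times> UNIV)) (\<lambda>i. \<Sum>k\<in>L \<times> (J \<times> UNIV). T2 V i k * y k) \<le> Mv * nrm (L \<times> (J \<times> UNIV)) y"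
proof -
  define S where "S = L \<times> (J \<times> (UNIV :: bool set))"
  define c where "c = fcoef1 (\<lambda>z. complex_of_real (V z - avg V))"
  have cg: "continuous_on UNIV (\<lambda>z. complex_of_real (V z - avg V))"
    using cV by (intro continuous_intros)
  have "(\<Sum>i\<in>S. (cmod (\<Sum>k\<in>S. T2 V i k * y k))^2)
      = (\<Sum>l\<in>L. \<Sum>a\<in>UNIV. \<Sum>j\<in>J. (cmod (\<Sum>k\<in>S. T2 V (l, j, a) k * y k))^2)"
    unfolding S_def by (rule sum_S[OF L J])
  also have "\<dots> = (\<Sum>l\<in>L. \<Sum>a\<in>UNIV. \<Sum>j\<in>J. (cmod (\<Sum>j'\<in>J. c (j - j') * y (l, j', a)))^2)"
    unfolding S_def c_def by (intro sum.cong refl) (simp add: T2_row[OF L J])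
  also have "\<dots> \<le> (\<Sum>l\<in>L. \<Sum>a\<in>UNIV. Mv^2 * (\<Sum>j\<in>J. (cmod (y (l, j, a)))^2))"
    unfolding c_def
    by (intro sum_mono T2_core[OF cg Mb J])
  also have "\<dots> = Mv^2 * (\<Sum>i\<in>S. (cmod (y i))^2)"
    unfolding S_def by (simp add: sum_S[OF L J] sum_distrib_left)
  finally have "(nrm S (\<lambda>i. \<Sum>k\<in>S. T2 V i k * y k))^2 \<le> (Mv * nrm S y)^2"
    by (simp add: nrm_def sum_nonneg power_mult_distrib)
  then show ?thesis unfolding S_def[symmetric]
    using Mv0 nrm_nonneg by (meson mult_nonneg_nonneg power2_le_imp_le)
qed

lemma T1_op:
  fixes T :: "'i \<Rightarrow> 'i \<Rightarrow> complex"
  assumes S: "finite S" and eps: "eps \<ge> 0" and bd: "ereal eps * opnorm0 T \<le> 1"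
  shows "nrm S (\<lambda>i. \<Sum>k\<in>S. complex_of_real eps * T i k * y k) \<le> nrm S y"
proof (cases "eps = 0 \<or> nrm S y = 0")
  case True
  then show ?thesis
  proof
    assume "eps = 0" then show ?thesis by (simp add: nrm_def sum_nonneg)
  next
    assume "nrm S y = 0"
    then have "\<forall>i\<in>S. y i = 0" using nrm_zero[OF S] by blast
    then show ?thesis by (simp add: nrm_def)
  qed
next
  case False
  then have e0: "eps > 0" and r0: "nrm S y > 0" using eps nrm_nonneg[of S y] by auto
  define r where "r = nrm S y"
  define x where "x k = (if k \<in> S then y k / complex_of_real r else 0)" for k
  have supp: "{k. x k \<noteq> 0} \<subseteq> S" by (auto simp: x_def)
  have fin: "finite {k. x k \<noteq> 0}" using supp S by (rule finite_subset)
  have sumx: "(\<Sum>k\<in>{k. x k \<noteq> 0}. F k * x k) = (\<Sum>k\<in>S. F k * x k)" for F :: "'i \<Rightarrow> complex"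
    by (rule sum.mono_neutral_left[OF S supp]) auto
  have sumx2: "(\<Sum>k\<in>{k. x k \<noteq> 0}. (cmod (x k))^2) = (\<Sum>k\<in>S. (cmod (x k))^2)"
    by (rule sum.mono_neutral_left[OF S supp]) auto
  have "(\<Sum>k\<in>S. (cmod (x k))^2) = (\<Sum>k\<in>S. (cmod (y k))^2) / r^2"
    by (simp add: x_def sum_divide_distrib norm_divide power_divide)
  also have "\<dots> = 1" using r0 by (simp add: r_def nrm_def sum_nonneg)
  finally have x1: "(\<Sum>k\<in>{k. x k \<noteq> 0}. (cmod (x k))^2) \<le> 1" by (simp add: sumx2)
  have Tx: "(\<Sum>k\<in>S. T i k * x k) = (\<Sum>k\<in>S. T i k * y k) / complex_of_real r" if "i \<in> S" for i
    by (simp add: x_def sum_divide_distrib)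
  have "ereal (sqrt (\<Sum>i\<in>S. (cmod (\<Sum>k\<in>{k. x k \<noteq> 0}. T i k * x k))^2)) \<le> opnorm0 T"
    unfolding opnorm0_def
    by (rule SUP_upper2[of "(x, S)"]) (use fin x1 S in auto)
  moreover have "sqrt (\<Sum>i\<in>S. (cmod (\<Sum>k\<in>{k. x k \<noteq> 0}. T i k * x k))^2) = nrm S (\<lambda>i. \<Sum>k\<in>S. T i k * y k) / r"
  proof -
    have "(\<Sum>i\<in>S. (cmod (\<Sum>k\<in>{k. x k \<noteq> 0}. T i k * x k))^2) = (\<Sum>i\<in>S. (cmod (\<Sum>k\<in>S. T i k * y k))^2) / r^2"
      unfolding sum_divide_distrib by (intro sum.cong refl) (simp add: sumx Tx norm_divide power_divide)
    then show ?thesis using r0 by (simp add: nrm_def r_def real_sqrt_divide)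
  qed
  ultimately have le: "ereal (nrm S (\<lambda>i. \<Sum>k\<in>S. T i k * y k) / r) \<le> opnorm0 T" by simp
  have "ereal eps * ereal (nrm S (\<lambda>i. \<Sum>k\<in>S. T i k * y k) / r) \<le> ereal eps * opnorm0 T"
    using e0 le by (intro ereal_mult_left_mono) auto
  also have "\<dots> \<le> 1" by (rule bd)
  finally have "eps * (nrm S (\<lambda>i. \<Sum>k\<in>S. T i k * y k) / r) \<le> 1" by simp
  then have "eps * nrm S (\<lambda>i. \<Sum>k\<in>S. T i k * y k) \<le> r" using r0 by (simp add: r_def field_simps)
  moreover have "nrm S (\<lambda>i. \<Sum>k\<in>S. complex_of_real eps * T i k * y k) = eps * nrm S (\<lambda>i. \<Sum>k\<in>S. T i k * y k)"
  proof -
    have "(\<Sum>i\<in>S. (cmod (\<Sum>k\<in>S. complex_of_real eps * T i k * y k))^2) = eps^2 * (\<Sum>i\<in>S. (cmod (\<Sum>k\<in>S. T i k * y k))^2)"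
      using e0 by (simp add: mult.assoc sum_distrib_left[symmetric] norm_mult power_mult_distrib)
    then show ?thesis using e0 by (simp add: nrm_def real_sqrt_mult)
  qed
  ultimately show ?thesis by (simp add: r_def)
qed

lemma idot_bound:
  fixes l :: "int^'v::finite" and ombar :: "real^'v"
  assumes l: "maxnorm l \<le> int N" and om: "\<forall>i. \<bar>ombar $ i\<bar> \<le> 1" and lam: "lam \<in> {1/2..3/2}"
  shows "\<bar>idot l (lam *\<^sub>R ombar)\<bar> \<le> 3/2 * real CARD('v) * real N"
proof -
  have li: "\<bar>real_of_int (l $ i)\<bar> \<le> real N" for i
    using l by (simp add: maxnorm_le) (metis of_int_abs of_int_le_iff of_int_of_nat_eq)
  have "\<bar>idot l (lam *\<^sub>R ombar)\<bar> \<le> (\<Sum>i\<in>UNIV. \<bar>real_of_int (l $ i) * (lam * ombar $ i)\<bar>)"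
    unfolding idot_def by (simp add: sum_abs)
  also have "\<dots> \<le> (\<Sum>i\<in>(UNIV::'v set). real N * (3/2))"
  proof (rule sum_mono)
    fix i :: 'v
    have "\<bar>lam * ombar $ i\<bar> \<le> 3/2 * 1" using lam om[rule_format, of i]
      unfolding abs_mult by (intro mult_mono) auto
    then show "\<bar>real_of_int (l $ i) * (lam * ombar $ i)\<bar> \<le> real N * (3/2)"
      unfolding abs_mult[of "real_of_int (l $ i)"] using li[of i]
      by (intro mult_mono) auto
  qed
  also have "\<dots> = 3/2 * real CARD('v) * real N" by simp
  finally show ?thesis .
qed

lemma sqnorm_bound:
  fixes j j0 :: "int^'d::finite"
  assumes j: "maxnorm (j - j0) \<le> int N" and j0: "maxnorm j0 < 2 * int N"
  shows "0 \<le> real_of_int (sqnorm j)" "real_of_int (sqnorm j) \<le> 9 * real CARD('d) * (real N)^2"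
proof -
  show "0 \<le> real_of_int (sqnorm j)" by (simp add: sqnorm_def sum_nonneg)
  have ji: "\<bar>j $ i\<bar> \<le> 3 * int N" for i
  proof -
    have "\<bar>j $ i - j0 $ i\<bar> \<le> int N" using j by (simp add: maxnorm_le)
    moreover have "\<bar>j0 $ i\<bar> < 2 * int N" using j0 by (simp add: maxnorm_lt)
    ultimately show ?thesis by linarith
  qed
  have "(j $ i)^2 \<le> (3 * int N)^2" for i
    using ji[of i] by (metis abs_le_square_iff abs_of_nonneg of_nat_0_le_iff zero_le_mult_iff zero_le_numeral)
  then have "sqnorm j \<le> (\<Sum>i\<in>(UNIV::'d set). (3 * int N)^2)"
    unfolding sqnorm_def by (intro sum_mono) auto
  also have "\<dots> = int CARD('d) * (9 * (int N)^2)" by (simp add: power_mult_distrib)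
  finally have "sqnorm j \<le> int CARD('d) * (9 * (int N)^2)" .
  then have "real_of_int (sqnorm j) \<le> real_of_int (int CARD('d) * (9 * (int N)^2))" by linarith
  then show "real_of_int (sqnorm j) \<le> 9 * real CARD('d) * (real N)^2" by simp
qed

lemma main_bound:
  fixes V :: "real^'d::finite \<Rightarrow> real" and ombar :: "real^'v::finite"
    and f :: "real^'v \<Rightarrow> real^'d \<Rightarrow> real \<Rightarrow> real"
    and u :: "real \<Rightarrow> real \<Rightarrow> real^'v \<Rightarrow> real^'d \<Rightarrow> complex"
  assumes cV: "continuous_on UNIV V"
    and Mb: "\<forall>z\<in>tcube. cmod (complex_of_real (V z - avg V)) \<le> Mv" and Mv0: "0 \<le> Mv"
    and NN: "real CARD('v) + \<bar>avg V\<bar> + Mv + 3 \<le> real N"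
    and tau: "\<tau> > 0" and om: "\<forall>i. \<bar>ombar $ i\<bar> \<le> 1" and lam: "lam \<in> {1/2..3/2}"
    and eps: "eps \<ge> 0" and T1b: "ereal eps * opnorm0 (T1 f (u eps lam)) \<le> 1"
    and j0: "maxnorm j0 < 2 * int N"
  shows "B02 \<tau> V ombar f u N j0 eps lam
           \<subseteq> {- 11 * real CARD('d) * real N ^ 2 <..< 11 * real CARD('d) * real N ^ 2}"
proof
  fix \<theta> assume th: "\<theta> \<in> B02 \<tau> V ombar f u N j0 eps lam"
  define d where "d = real CARD('d)"
  define \<nu> where "\<nu> = real CARD('v)"
  define Nr where "Nr = real N"
  define m where "m = avg V"
  have "0 < CARD('d)" using finite_UNIV_card_ge_0 finite_class.finite_UNIV by blast
  then have d1: "d \<ge> 1" unfolding d_def by simp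
  have "0 < CARD('v)" using finite_UNIV_card_ge_0 finite_class.finite_UNIV by blast
  then have nu1: "\<nu> \<ge> 1" unfolding \<nu>_def by simp
  have N3: "Nr \<ge> 3" using NN Mv0 unfolding Nr_def by linarith
  define L where "L = {l::int^'v. maxnorm l \<le> int N}"
  define J where "J = {j::int^'d. maxnorm (j - j0) \<le> int N}"
  define S where "S = L \<times> (J \<times> (UNIV :: bool set))"
  have finL: "finite L" unfolding L_def by (rule finite_L)
  have finJ: "finite J" unfolding J_def by (rule finite_J)
  have finS: "finite S" unfolding S_def using finL finJ by simp
  have tr: "trunc N j0 = S" unfolding S_def L_def J_def by (rule trunc_eq)
  define \<delta> where "\<delta> = 2 * d * Nr^2 - 3/2 * \<nu> * Nr - \<bar>m\<bar>"
  define \<rho> where "\<rho> = Mv + 1"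
  have gap: "\<delta> - \<rho> \<ge> 2"
  proof -
    define A where "A = Nr * Nr"
    define c where "c = \<bar>m\<bar> + Mv + 3"
    have c0: "c \<ge> 3" unfolding c_def using Mv0 by simp
    have "Nr * (\<nu> + c) \<le> Nr * Nr"
      using NN N3 unfolding Nr_def \<nu>_def m_def c_def by (intro mult_left_mono) auto
    then have e1: "Nr * \<nu> + Nr * c \<le> A" unfolding A_def by (simp add: distrib_left)
    have e2: "1 * c \<le> Nr * c" using N3 c0 by (intro mult_right_mono) auto
    have e3: "1 * A \<le> d * A" using d1 unfolding A_def by (intro mult_right_mono) auto
    have e4: "0 \<le> Nr * \<nu>" using N3 nu1 by simp
    have "\<delta> = 2 * (d * A) - 3/2 * (Nr * \<nu>) - \<bar>m\<bar>"
      unfolding \<delta>_def A_def by (simp add: power2_eq_square mult_ac)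
    moreover have "\<bar>m\<bar> \<ge> 0" by simp
    ultimately show ?thesis using e1 e2 e3 e4 c_def Mv0 unfolding \<rho>_def by linarith
  qed
  show "\<theta> \<in> {- 11 * real CARD('d) * real N ^ 2 <..< 11 * real CARD('d) * real N ^ 2}"
  proof (rule ccontr)
    assume "\<theta> \<notin> {- 11 * real CARD('d) * real N ^ 2 <..< 11 * real CARD('d) * real N ^ 2}"
    then have thb: "\<theta> \<ge> 11 * d * Nr^2 \<or> \<theta> \<le> - 11 * d * Nr^2"
      unfolding d_def Nr_def by auto
    define D :: "('v, 'd) idx \<Rightarrow> real" where "D = (\<lambda>(l, j, a). (if a then 1 else -1) * idot l (lam *\<^sub>R ombar)
                          + real_of_int (sqnorm j) + avg V + \<theta> * (if a then 1 else -1))"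
    define P where "P i k = T2 V i k - complex_of_real eps * T1 f (u eps lam) i k" for i k
    have MD': "Aop V ombar f u eps lam \<theta> i k
                = (if i = k then complex_of_real (D i) else 0) + P i k" for i k
    proof -
      obtain l j a where i: "i = (l, j, a)" by (cases i) auto
      obtain l' j' a' where k: "k = (l', j', a')" by (cases k) auto
      show ?thesis unfolding i k Aop_def D_def P_def by simp
    qed
    then have MD: "\<forall>i\<in>S. \<forall>k\<in>S. Aop V ombar f u eps lam \<theta> i k
                = (if i = k then complex_of_real (D i) else 0) + P i k" by blast
    have Dlow: "\<forall>i\<in>S. \<bar>D i\<bar> \<ge> \<delta>"
    proof
      fix i assume "i \<in> S"
      then obtain l j a where i: "i = (l, j, a)" and l: "maxnorm l \<le> int N" and j: "maxnorm (j - j0) \<le> int N"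
        unfolding S_def L_def J_def by auto
      define w where "w = idot l (lam *\<^sub>R ombar)"
      define s where "s = real_of_int (sqnorm j)"
      have w: "\<bar>w\<bar> \<le> 3/2 * \<nu> * Nr" unfolding w_def \<nu>_def Nr_def by (rule idot_bound[OF l om lam])
      have s0: "0 \<le> s" and s9: "s \<le> 9 * d * Nr^2"
        unfolding s_def d_def Nr_def using sqnorm_bound[OF j j0] by auto
      have X0: "0 \<le> d * Nr^2" using d1 by simp
      have Dv: "D i = (if a then w + s + m + \<theta> else - w + s + m - \<theta>)"
        by (simp add: D_def i w_def s_def m_def)
      have w1: "w \<le> 3/2 * \<nu> * Nr" "- w \<le> 3/2 * \<nu> * Nr" using w by linarith+
      have m1: "m \<le> \<bar>m\<bar>" "- m \<le> \<bar>m\<bar>" by linarith+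
      have "D i \<ge> \<delta> \<or> D i \<le> - \<delta>"
      proof (cases a)
        case True
        then have "D i = w + s + m + \<theta>" using Dv by simp
        then show ?thesis using thb w1 m1 s0 s9 X0 unfolding \<delta>_def by linarith
      next
        case False
        then have "D i = - w + s + m - \<theta>" using Dv by simp
        then show ?thesis using thb w1 m1 s0 s9 X0 unfolding \<delta>_def by linarith
      qed
      moreover have "D i \<le> \<bar>D i\<bar>" "- D i \<le> \<bar>D i\<bar>" by linarith+
      ultimately show "\<bar>D i\<bar> \<ge> \<delta>" by linarith
    qed
    have Pbd: "nrm S (\<lambda>i. \<Sum>k\<in>S. P i k * y k) \<le> \<rho> * nrm S y" for y
    proof -
      have pw: "(\<Sum>k\<in>S. P i k * y k) = (\<Sum>k\<in>S. T2 V i k * y k) + - (\<Sum>k\<in>S. complex_of_real eps * T1 f (u eps lam) i k * y k)" for i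
        unfolding P_def left_diff_distrib sum_subtractf by simp
      have "nrm S (\<lambda>i. \<Sum>k\<in>S. P i k * y k)
          = nrm S (\<lambda>i. (\<Sum>k\<in>S. T2 V i k * y k) + - (\<Sum>k\<in>S. complex_of_real eps * T1 f (u eps lam) i k * y k))"
        by (simp only: pw)
      also have "\<dots> \<le> nrm S (\<lambda>i. \<Sum>k\<in>S. T2 V i k * y k) + nrm S (\<lambda>i. - (\<Sum>k\<in>S. complex_of_real eps * T1 f (u eps lam) i k * y k))"
        by (rule nrm_triangle)
      also have "nrm S (\<lambda>i. - (\<Sum>k\<in>S. complex_of_real eps * T1 f (u eps lam) i k * y k))
          = nrm S (\<lambda>i. \<Sum>k\<in>S. complex_of_real eps * T1 f (u eps lam) i k * y k)"
        by (simp add: nrm_def)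
      also have "nrm S (\<lambda>i. \<Sum>k\<in>S. complex_of_real eps * T1 f (u eps lam) i k * y k) \<le> nrm S y"
        by (rule T1_op[OF finS eps T1b])
      also have "nrm S (\<lambda>i. \<Sum>k\<in>S. T2 V i k * y k) \<le> Mv * nrm S y"
        unfolding S_def by (rule T2_op[OF cV Mb Mv0 finL finJ])
      finally show ?thesis by (simp add: \<rho>_def algebra_simps)
    qed
    have "inv_opnorm S (Aop V ombar f u eps lam \<theta>) \<le> ereal (1 / (\<delta> - \<rho>))"
      by (rule inv_bound[OF finS MD Dlow Pbd]) (use gap Mv0 in \<open>auto simp: \<rho>_def\<close>)
    also have "1 / (\<delta> - \<rho>) \<le> 1 / 2" using gap by (simp add: field_simps)
    also have "1 / 2 \<le> real N powr \<tau> / 2"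
      using N3 tau unfolding Nr_def by (simp add: ge_one_powr_ge_zero)
    finally have "inv_opnorm S (Aop V ombar f u eps lam \<theta>) \<le> ereal (real N powr \<tau> / 2)" by simp
    moreover have "inv_opnorm S (Aop V ombar f u eps lam \<theta>) > ereal (real N powr \<tau> / 2)"
      using th unfolding B02_def tr by simp
    ultimately show False by simp
  qed
qed

theorem lemma6p7:
  fixes V :: "real^'d \<Rightarrow> real" and r :: nat
  assumes "periodic1 V" and "Ck r V"
  shows "\<exists>N0::nat. \<forall>(ombar::real^'v) (\<tau>::real) (eps0::real)
      (f::real^'v \<Rightarrow> real^'d \<Rightarrow> real \<Rightarrow> real)
      (u::real \<Rightarrow> real \<Rightarrow> real^'v \<Rightarrow> real^'d \<Rightarrow> complex) (s::real).
     \<tau> > 0 \<and> eps0 > 0 \<and> (\<forall>i. \<bar>ombar $ i\<bar> \<le> 1) \<and>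
     (\<forall>t. periodic2 (\<lambda>x y. f x y t)) \<and> Ck r (\<lambda>z. f (fst z) (fst (snd z)) (snd (snd z))) \<and>
     s > real (CARD('v) + CARD('d)) / 2 \<and>
     (\<forall>eps\<in>{0..eps0}. \<forall>lam\<in>{1/2..3/2}. in_Hs s (u eps lam)) \<and>
     (\<forall>eps\<in>{0..eps0}. \<forall>lam\<in>{1/2..3/2}. ereal eps * opnorm0 (T1 f (u eps lam)) \<le> 1)
     \<longrightarrow> (\<forall>N j0 eps lam. N \<ge> N0 \<and> maxnorm j0 < 2 * int N \<and> eps \<in> {0..eps0} \<and> lam \<in> {1/2..3/2}
            \<longrightarrow> B02 \<tau> V ombar f u N j0 eps lam
                  \<subseteq> {- 11 * real CARD('d) * real N ^ 2 <..< 11 * real CARD('d) * real N ^ 2})"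
  proof -
  have cV: "continuous_on UNIV V" using assms(2) by (rule Ck_cont)
  have "compact ((\<lambda>z. complex_of_real (V z - avg V)) ` (tcube :: (real^'d) set))"
    by (rule compact_continuous_image) (use cV compact_tcube in \<open>auto intro!: continuous_intros intro: continuous_on_subset\<close>)
  then have "bounded ((\<lambda>z. complex_of_real (V z - avg V)) ` (tcube :: (real^'d) set))"
    by (rule compact_imp_bounded)
  then obtain B where B: "\<forall>z\<in>(tcube :: (real^'d) set). cmod (complex_of_real (V z - avg V)) \<le> B"
    by (auto simp: bounded_iff)
  define Mv where "Mv = max B 0"
  have Mb: "\<forall>z\<in>(tcube :: (real^'d) set). cmod (complex_of_real (V z - avg V)) \<le> Mv"
    using B unfolding Mv_def by (meson max.coboundedI1)
  have Mv0: "0 \<le> Mv" unfolding Mv_def by simp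
  define N0 :: nat where "N0 = nat \<lceil>real CARD('v) + \<bar>avg V\<bar> + Mv + 3\<rceil>"
  have N0p: "real CARD('v) + \<bar>avg V\<bar> + Mv + 3 \<le> real N" if "N0 \<le> N" for N :: nat
  proof -
    have "real CARD('v) + \<bar>avg V\<bar> + Mv + 3 \<le> real N0"
      unfolding N0_def by (rule real_nat_ceiling_ge)
    also have "\<dots> \<le> real N" using that by simp
    finally show ?thesis .
  qed
  show ?thesis
    apply (rule exI[of _ N0])
    apply (intro allI impI)
    apply (elim conjE)
    apply (rule main_bound[OF cV Mb Mv0])
    apply (auto intro: N0p)
    done
qed

end
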